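(* Let $\mathcal{D}=\mathcal{P}_{\mathcal{D}}\cup\mathcal{L}_{\mathcal{D}}$ be a non-primal dominating set of the incidence graph of an arbitrary projective plane $\Pi_q$ of order $q$. Let $k$ be the maximum number of points of $\mathcal{P}_{\mathcal{D}}$ on a line, and $c$ the maximum number of lines of $\mathcal{L}_{\mathcal{D}}$ through a point. If $|\mathcal{D}|+|\mathcal{P}_{\mathcal{D}}|\leq 4q-3$, then $k\leq|\mathcal{P}_{\mathcal{D}}|-q+1$. If $|\mathcal{D}|+|\mathcal{L}_{\mathcal{D}}|\leq 4q-3$, then $c\leq|\mathcal{L}_{\mathcal{D}}|-q+1$. Both conclusions hold if $|\mathcal{D}|\leq(5q-3)/2$.
   Context: A dominating set $\mathcal{D}=\mathcal{P}_{\mathcal{D}}\cup\mathcal{L}_{\mathcal{D}}$ of the incidence graph of $\Pi_q$ is a set of points and lines such that every point not in $\mathcal{P}_{\mathcal{D}}$ lies on a line of $\mathcal{L}_{\mathcal{D}}$ and every line not in $\mathcal{L}_{\mathcal{D}}$ contains a point of $\mathcal{P}_{\mathcal{D}}$. $\mathcal{D}$ is primal if it contains $q$ concurrent lines or $q$ collinear points; non-primal otherwise. *)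

theory Defs
  imports Main
begin

definition projective_plane ::
  "'p set \<Rightarrow> 'l set \<Rightarrow> ('p \<Rightarrow> 'l \<Rightarrow> bool) \<Rightarrow> nat \<Rightarrow> bool" where
  "projective_plane Pts Lns inc q \<longleftrightarrow>
     (\<forall>p\<in>Pts. \<forall>p'\<in>Pts. p \<noteq> p' \<longrightarrow> (\<exists>!l. l \<in> Lns \<and> inc p l \<and> inc p' l)) \<and>
     (\<forall>l\<in>Lns. \<forall>l'\<in>Lns. l \<noteq> l' \<longrightarrow> (\<exists>!p. p \<in> Pts \<and> inc p l \<and> inc p l')) \<and>
     (\<exists>Q. Q \<subseteq> Pts \<and> finite Q \<and> card Q = 4 \<and>
        (\<forall>l\<in>Lns. card {p\<in>Q. inc p l} \<le> 2)) \<and>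
     (\<forall>l\<in>Lns. finite {p\<in>Pts. inc p l} \<and> card {p\<in>Pts. inc p l} = q + 1)"

definition dominating_set ::
  "'p set \<Rightarrow> 'l set \<Rightarrow> ('p \<Rightarrow> 'l \<Rightarrow> bool) \<Rightarrow> 'p set \<Rightarrow> 'l set \<Rightarrow> bool" where
  "dominating_set Pts Lns inc PD LD \<longleftrightarrow>
     PD \<subseteq> Pts \<and> LD \<subseteq> Lns \<and>
     (\<forall>p\<in>Pts - PD. \<exists>l\<in>LD. inc p l) \<and>
     (\<forall>l\<in>Lns - LD. \<exists>p\<in>PD. inc p l)"

definition primal ::
  "'p set \<Rightarrow> 'l set \<Rightarrow> ('p \<Rightarrow> 'l \<Rightarrow> bool) \<Rightarrow> nat \<Rightarrow> 'p set \<Rightarrow> 'l set \<Rightarrow> bool" where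
  "primal Pts Lns inc q PD LD \<longleftrightarrow>
     (\<exists>p\<in>Pts. \<exists>S. S \<subseteq> LD \<and> card S = q \<and> (\<forall>l\<in>S. inc p l)) \<or>
     (\<exists>l\<in>Lns. \<exists>S. S \<subseteq> PD \<and> card S = q \<and> (\<forall>p\<in>S. inc p l))"

definition max_pts_on_line :: "'l set \<Rightarrow> ('p \<Rightarrow> 'l \<Rightarrow> bool) \<Rightarrow> 'p set \<Rightarrow> nat" where
  "max_pts_on_line Lns inc PD = Max ((\<lambda>l. card {p\<in>PD. inc p l}) ` Lns)"

definition max_lines_through_pt :: "'p set \<Rightarrow> ('p \<Rightarrow> 'l \<Rightarrow> bool) \<Rightarrow> 'l set \<Rightarrow> nat" where
  "max_lines_through_pt Pts inc LD = Max ((\<lambda>p. card {l\<in>LD. inc p l}) ` Pts)"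

end

theory Submission imports Defs begin

locale pplane =
  fixes Pts :: "'p set" and Lns :: "'l set" and inc :: "'p \<Rightarrow> 'l \<Rightarrow> bool" and q :: nat
  assumes two_pts: "\<lbrakk>p\<in>Pts; p'\<in>Pts; p\<noteq>p'\<rbrakk> \<Longrightarrow> \<exists>!l. l\<in>Lns \<and> inc p l \<and> inc p' l"
  and two_lns: "\<lbrakk>l\<in>Lns; l'\<in>Lns; l\<noteq>l'\<rbrakk> \<Longrightarrow> \<exists>!p. p\<in>Pts \<and> inc p l \<and> inc p l'"
  and line_fin: "l\<in>Lns \<Longrightarrow> finite {p\<in>Pts. inc p l}"
  and line_card: "l\<in>Lns \<Longrightarrow> card {p\<in>Pts. inc p l} = q+1"
  and pt_fin: "p\<in>Pts \<Longrightarrow> finite {l\<in>Lns. inc p l}"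
  and pt_card: "p\<in>Pts \<Longrightarrow> card {l\<in>Lns. inc p l} = q+1"
  and finPts: "finite Pts" and finLns: "finite Lns" and neLns: "Lns \<noteq> {}" and nePts: "Pts \<noteq> {}"
begin

lemma dual: "pplane Lns Pts (\<lambda>l p. inc p l) q"
  using two_pts two_lns line_fin line_card pt_fin pt_card finPts finLns neLns nePts
  unfolding pplane_def by blast

lemma same_line: "\<lbrakk>p\<in>Pts; p'\<in>Pts; p\<noteq>p'; L\<in>Lns; L'\<in>Lns; inc p L; inc p' L; inc p L'; inc p' L'\<rbrakk> \<Longrightarrow> L = L'"
  using two_pts by blast

lemma core:
  assumes dom: "dominating_set Pts Lns inc PD LD"
    and np: "\<not> primal Pts Lns inc q PD LD"
    and l: "l \<in> Lns"
    and hyp: "card PD + 2 \<le> card {p\<in>PD. inc p l} + q"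
  shows "4*q \<le> 2*card PD + card LD + 2 \<and> q \<le> card LD"
proof -
  have PDs: "PD \<subseteq> Pts" and LDs: "LD \<subseteq> Lns" and domP: "\<forall>p\<in>Pts - PD. \<exists>l\<in>LD. inc p l"
    and domL: "\<forall>l\<in>Lns - LD. \<exists>p\<in>PD. inc p l"
    using dom unfolding dominating_set_def by auto
  have finPD: "finite PD" using PDs finPts finite_subset by blast
  have finLD: "finite LD" using LDs finLns finite_subset by blast
  define Pl where "Pl = {p\<in>Pts. inc p l}"
  define M where "M = PD - Pl"
  have finPl: "finite Pl" using line_fin l Pl_def by simp
  have cPl: "card Pl = q+1" using line_card l Pl_def by simp
  have kk: "{p\<in>PD. inc p l} = PD \<inter> Pl" using PDs Pl_def by auto
  have x: "card PD = card (PD \<inter> Pl) + card M"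
  proof -
    have "PD = (PD \<inter> Pl) \<union> M" "(PD \<inter> Pl) \<inter> M = {}" using M_def by auto
    then show ?thesis using finPD card_Un_disjoint
      by (metis finite_Int finite_subset inf_le1 M_def Diff_subset)
  qed
  have mq: "card M + 2 \<le> q" using hyp kk x by simp
  have kq: "card (PD \<inter> Pl) + 1 \<le> q"
  proof (rule ccontr)
    assume "\<not> ?thesis"
    then have "q \<le> card (PD \<inter> Pl)" by simp
    then obtain S where "S \<subseteq> PD \<inter> Pl" "card S = q" by (meson obtain_subset_with_card_n)
    then have "primal Pts Lns inc q PD LD" unfolding primal_def using l Pl_def by blast
    then show False using np by simp
  qed
  define A where "A = Pl - PD"
  have finA: "finite A" using finPl A_def by simp
  have cA: "card A + card (PD \<inter> Pl) = q + 1"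
  proof -
    have "Pl = A \<union> (PD \<inter> Pl)" "A \<inter> (PD \<inter> Pl) = {}" using A_def by auto
    then show ?thesis using cPl finPl
      by (metis card_Un_disjoint finite_Un)
  qed
  define LP where "LP P = {L\<in>Lns. inc P L} - {l}" for P
  have cLP: "card (LP P) = q" "finite (LP P)" if "P \<in> A" for P
  proof -
    have P: "P \<in> Pts" "inc P l" using that A_def Pl_def by auto
    show "card (LP P) = q" using pt_card[OF P(1)] pt_fin[OF P(1)] P l LP_def by simp
    show "finite (LP P)" using pt_fin[OF P(1)] LP_def by simp
  qed
  define SP where "SP P = {L\<in>LD. inc P L \<and> L \<noteq> l}" for P
  have SPcard: "q \<le> card (SP P) + card M" if PA: "P \<in> A" for P
  proof -
    have P: "P \<in> Pts" "inc P l" "P \<notin> PD" using PA A_def Pl_def by auto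
    define TP where "TP = LP P - LD"
    have SPeq: "SP P = LP P \<inter> LD" using SP_def LP_def LDs by auto
    have "card (LP P) = card (SP P) + card TP"
    proof -
      have "LP P = SP P \<union> TP" "SP P \<inter> TP = {}" using SPeq TP_def by auto
      then show ?thesis using cLP(2)[OF PA] by (metis card_Un_disjoint finite_Un)
    qed
    moreover have "card TP \<le> card M"
    proof -
      define g where "g L = (SOME r. r\<in>PD \<and> inc r L)" for L
      have g: "g L \<in> PD \<and> inc (g L) L" if "L \<in> TP" for L
      proof -
        have "L \<in> Lns - LD" using that TP_def LP_def by auto
        then have "\<exists>r. r\<in>PD \<and> inc r L" using domL by auto
        then show ?thesis unfolding g_def by (rule someI_ex)
      qed
      have gM: "g L \<in> M" if "L \<in> TP" for L
      proof -
        have L: "L \<in> Lns" "inc P L" "L \<noteq> l" using that TP_def LP_def by auto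
        have "g L \<notin> Pl"
        proof
          assume "g L \<in> Pl"
          then have "inc (g L) l" using Pl_def by simp
          moreover have "g L \<noteq> P" using g[OF that] P by auto
          ultimately have "L = l" using same_line[of "g L" P L l] g[OF that] PDs P L l by auto
          then show False using L by simp
        qed
        then show ?thesis using g[OF that] M_def by auto
      qed
      have "inj_on g TP"
      proof
        fix L L' assume LL: "L \<in> TP" "L' \<in> TP" "g L = g L'"
        have "g L \<noteq> P" using g[OF LL(1)] P by auto
        then show "L = L'" using same_line[of "g L" P L L'] g[OF LL(1)] g[OF LL(2)] LL PDs P TP_def LP_def by auto
      qed
      moreover have "finite M" using finPD M_def by simp
      ultimately show ?thesis using gM card_inj_on_le by (metis image_subsetI)
    qed
    ultimately show ?thesis using cLP(1)[OF PA] by simp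
  qed
  have disj: "\<forall>P\<in>A. \<forall>P'\<in>A. P \<noteq> P' \<longrightarrow> SP P \<inter> SP P' = {}"
  proof (intro ballI impI)
    fix P P' assume PP: "P \<in> A" "P' \<in> A" "P \<noteq> P'"
    show "SP P \<inter> SP P' = {}"
    proof (rule ccontr)
      assume "SP P \<inter> SP P' \<noteq> {}"
      then obtain L where L: "L \<in> LD" "inc P L" "inc P' L" "L \<noteq> l" using SP_def by auto
      have "L = l" using same_line[of P P' L l] L PP A_def Pl_def LDs l by auto
      then show False using L by simp
    qed
  qed
  have finSP: "\<forall>P\<in>A. finite (SP P)" using finLD SP_def by simp
  have "card (\<Union>P\<in>A. SP P) = (\<Sum>P\<in>A. card (SP P))"
    using card_UN_disjoint[OF finA finSP disj] .
  moreover have "(\<Union>P\<in>A. SP P) \<subseteq> LD" using SP_def by auto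
  ultimately have "(\<Sum>P\<in>A. card (SP P)) \<le> card LD" using finLD by (metis card_mono)
  moreover have "card A * (q - card M) \<le> (\<Sum>P\<in>A. card (SP P))"
    using sum_bounded_below[of A "q - card M" "\<lambda>P. card (SP P)"] SPcard by fastforce
  ultimately have yab: "card A * (q - card M) \<le> card LD" by simp
  have part1: "4*q \<le> 2*card PD + card LD + 2"
  proof -
    have "2 \<le> card A" using cA kq by linarith
    then obtain a' where a': "card A = a' + 2" by (metis add.commute le_Suc_ex)
    have "\<exists>b'. q - card M = b' + 2" using mq by presburger
    then obtain b' where b': "q - card M = b' + 2" by blast
    have "card A * (q - card M) = a'*b' + 2*a' + 2*b' + 4" using a' b' by (simp add: algebra_simps)
    then show ?thesis using yab a' b' x cA mq kq by linarith
  qed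
  have "A \<noteq> {}" using cA kq by (metis add_leD2 card.empty le_add1 nat_le_linear not_add_less1 Suc_eq_plus1 not_less_eq_eq add_0)
  then obtain P where PA: "P \<in> A" by blast
  have P: "P \<in> Pts" "inc P l" "P \<notin> PD" using PA A_def Pl_def by auto
  define Off where "Off = Pts - Pl"
  have Offeq: "Off = (\<Union>L\<in>LP P. {r\<in>Pts. inc r L} - {P})"
  proof
    show "Off \<subseteq> (\<Union>L\<in>LP P. {r\<in>Pts. inc r L} - {P})"
    proof
      fix r assume r: "r \<in> Off"
      then have rr: "r \<in> Pts" "\<not> inc r l" "r \<noteq> P" using Off_def Pl_def P by auto
      then obtain L where L: "L \<in> Lns" "inc P L" "inc r L" using two_pts[of P r] P by metis
      then have "L \<noteq> l" using rr by auto
      then show "r \<in> (\<Union>L\<in>LP P. {r\<in>Pts. inc r L} - {P})" using L rr LP_def by auto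
    qed
  next
    show "(\<Union>L\<in>LP P. {r\<in>Pts. inc r L} - {P}) \<subseteq> Off"
    proof
      fix r assume "r \<in> (\<Union>L\<in>LP P. {r\<in>Pts. inc r L} - {P})"
      then obtain L where L: "L \<in> Lns" "inc P L" "L \<noteq> l" "r \<in> Pts" "inc r L" "r \<noteq> P" using LP_def by auto
      have "\<not> inc r l" using same_line[of r P L l] L P l by auto
      then show "r \<in> Off" using Off_def Pl_def L by auto
    qed
  qed
  have cOff: "card Off = q * q"
  proof -
    have d: "\<forall>L\<in>LP P. \<forall>L'\<in>LP P. L \<noteq> L' \<longrightarrow> ({r\<in>Pts. inc r L} - {P}) \<inter> ({r\<in>Pts. inc r L'} - {P}) = {}"
      using same_line P LP_def by blast
    have f: "\<forall>L\<in>LP P. finite ({r\<in>Pts. inc r L} - {P})" using finPts by simp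
    have c: "card ({r\<in>Pts. inc r L} - {P}) = q" if "L \<in> LP P" for L
      using that LP_def line_card line_fin P by simp
    show ?thesis using card_UN_disjoint[OF cLP(2)[OF PA] f d] c cLP(1)[OF PA] Offeq by simp
  qed
  have MOff: "M \<subseteq> Off" using M_def Off_def PDs by auto
  have cN: "card (Off - M) = q * q - card M"
    using MOff cOff finPts Off_def by (simp add: card_Diff_subset finite_subset)
  have Nsub: "Off - M \<subseteq> (\<Union>L\<in>LD - {l}. {r\<in>Pts. inc r L} - Pl)"
  proof
    fix r assume r: "r \<in> Off - M"
    then have "r \<in> Pts - PD" "r \<notin> Pl" using Off_def M_def by auto
    then obtain L where "L \<in> LD" "inc r L" using domP by auto
    moreover have "L \<noteq> l" using calculation \<open>r \<notin> Pl\<close> \<open>r \<in> Pts - PD\<close> Pl_def by auto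
    ultimately show "r \<in> (\<Union>L\<in>LD - {l}. {r\<in>Pts. inc r L} - Pl)" using \<open>r \<in> Pts - PD\<close> \<open>r \<notin> Pl\<close> by auto
  qed
  have finU: "finite (\<Union>L\<in>LD - {l}. {r\<in>Pts. inc r L} - Pl)"
    by (rule finite_subset[OF _ finPts]) auto
  have "card (Off - M) \<le> card (\<Union>L\<in>LD - {l}. {r\<in>Pts. inc r L} - Pl)"
    by (rule card_mono[OF finU Nsub])
  also have "\<dots> \<le> (\<Sum>L\<in>LD - {l}. card ({r\<in>Pts. inc r L} - Pl))"
    by (rule card_UN_le) (use finLD in simp)
  also have "\<dots> \<le> card (LD - {l}) * q"
  proof (rule sum_bounded_above[of _ _ q, simplified])
    fix L assume L: "L \<in> LD - {l}"
    then have L': "L \<in> Lns" "L \<noteq> l" using LDs by auto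
    then obtain r0 where r0: "r0 \<in> Pts" "inc r0 L" "inc r0 l" using two_lns[of L l] l by metis
    have "{r\<in>Pts. inc r L} - Pl \<subseteq> {r\<in>Pts. inc r L} - {r0}" using r0 Pl_def by auto
    moreover have "card ({r\<in>Pts. inc r L} - {r0}) = q" using r0 line_card L' line_fin by simp
    ultimately show "card ({r\<in>Pts. inc r L} - Pl) \<le> q" using line_fin L'
      by (metis card_mono finite_Diff)
  qed
  also have "\<dots> \<le> card LD * q" using finLD by (simp add: card_Diff1_le)
  finally have "q * q - card M \<le> card LD * q" using cN by simp
  have part2: "q \<le> card LD"
  proof (rule ccontr)
    assume "\<not> ?thesis"
    then have "card LD + 1 \<le> q" by simp
    then have "card LD * q + q \<le> q * q" by (metis add_mult_distrib mult_1 mult_le_mono1)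
    then show False using \<open>q * q - card M \<le> card LD * q\<close> mq by linarith
  qed
  show ?thesis using part1 part2 by simp
qed

end

lemma pp_to_pplane:
  assumes "projective_plane Pts Lns inc q"
  shows "pplane Pts Lns inc q"
proof -
  note defs = assms[unfolded projective_plane_def]
  have A1: "\<And>p p'. p\<in>Pts \<Longrightarrow> p'\<in>Pts \<Longrightarrow> p\<noteq>p' \<Longrightarrow> \<exists>!l. l\<in>Lns \<and> inc p l \<and> inc p' l"
    using conjunct1[OF defs] by simp
  have A2: "\<And>l l'. l\<in>Lns \<Longrightarrow> l'\<in>Lns \<Longrightarrow> l\<noteq>l' \<Longrightarrow> \<exists>!p. p\<in>Pts \<and> inc p l \<and> inc p l'"
    using conjunct1[OF conjunct2[OF defs]] by simp
  have A4: "\<forall>l\<in>Lns. finite {p\<in>Pts. inc p l} \<and> card {p\<in>Pts. inc p l} = q + 1"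
    by (rule conjunct2[OF conjunct2[OF conjunct2[OF defs]]])
  have A4fin: "\<And>l. l\<in>Lns \<Longrightarrow> finite {p\<in>Pts. inc p l}" using A4 by simp
  have A4card: "\<And>l. l\<in>Lns \<Longrightarrow> card {p\<in>Pts. inc p l} = q + 1" using A4 by simp
  have "\<exists>Q. Q \<subseteq> Pts \<and> finite Q \<and> card Q = 4 \<and> (\<forall>l\<in>Lns. card {p\<in>Q. inc p l} \<le> 2)"
    by (rule conjunct1[OF conjunct2[OF conjunct2[OF defs]]])
  then obtain Q where Q: "Q \<subseteq> Pts" "finite Q" "card Q = 4" "\<forall>l\<in>Lns. card {p\<in>Q. inc p l} \<le> 2"
    by blast
  have offline: "\<exists>l\<in>Lns. \<not> inc p l" if p: "p \<in> Pts" for p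
  proof -
    have "3 \<le> card (Q - {p})" using Q by (simp add: card_Diff_singleton_if)
    then obtain T where T: "T \<subseteq> Q - {p}" "card T = 3" by (meson obtain_subset_with_card_n)
    then obtain a b c where abc: "T = {a,b,c}" "a\<noteq>b" "b\<noteq>c" "a\<noteq>c" by (auto simp: card_3_iff)
    have pts: "a\<in>Pts" "b\<in>Pts" "c\<in>Pts" "a\<noteq>p" "b\<noteq>p" "c\<noteq>p" "a\<in>Q" "b\<in>Q" "c\<in>Q"
      using T abc Q by auto
    obtain L1 where L1: "L1\<in>Lns" "inc a L1" "inc b L1" using A1[of a b] pts abc by blast
    obtain L2 where L2: "L2\<in>Lns" "inc a L2" "inc c L2" using A1[of a c] pts abc by blast
    show ?thesis
    proof (rule ccontr)
      assume "\<not> ?thesis"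
      then have "inc p L1" "inc p L2" using L1 L2 by auto
      then have "L1 = L2" using A1[of p a] p pts L1 L2 by blast
      then have "{a,b,c} \<subseteq> {x\<in>Q. inc x L1}" using L1 L2 pts by auto
      then have "3 \<le> card {x\<in>Q. inc x L1}"
        using card_mono[of "{x\<in>Q. inc x L1}" "{a,b,c}"] Q(2) abc by simp
      then show False using Q(4) L1 by fastforce
    qed
  qed
  have pt: "finite {L\<in>Lns. inc p L} \<and> card {L\<in>Lns. inc p L} = q+1" if p: "p\<in>Pts" for p
  proof -
    obtain l0 where l0: "l0\<in>Lns" "\<not> inc p l0" using offline p by blast
    define ln where "ln r = (THE L. L\<in>Lns \<and> inc p L \<and> inc r L)" for r
    have lnP: "ln r \<in> Lns \<and> inc p (ln r) \<and> inc r (ln r)" if r: "r\<in>Pts" "inc r l0" for r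
    proof -
      have "r \<noteq> p" using r l0 by auto
      then have "\<exists>!L. L\<in>Lns \<and> inc p L \<and> inc r L" using A1 p r by blast
      then show ?thesis unfolding ln_def by (rule theI')
    qed
    have "bij_betw ln {r\<in>Pts. inc r l0} {L\<in>Lns. inc p L}"
    proof (rule bij_betw_imageI)
      show "inj_on ln {r\<in>Pts. inc r l0}"
      proof
        fix r r' assume r: "r \<in> {r\<in>Pts. inc r l0}" "r' \<in> {r\<in>Pts. inc r l0}" "ln r = ln r'"
        show "r = r'"
        proof (rule ccontr)
          assume "r \<noteq> r'"
          then have "ln r = l0" using A1[of r r'] lnP[of r] lnP[of r'] r l0 by auto
          then show False using lnP[of r] r l0 by auto
        qed
      qed
      show "ln ` {r\<in>Pts. inc r l0} = {L\<in>Lns. inc p L}"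
      proof
        show "ln ` {r\<in>Pts. inc r l0} \<subseteq> {L\<in>Lns. inc p L}" using lnP by auto
        show "{L\<in>Lns. inc p L} \<subseteq> ln ` {r\<in>Pts. inc r l0}"
        proof
          fix L assume L: "L \<in> {L\<in>Lns. inc p L}"
          then have "L \<noteq> l0" using l0 by auto
          then obtain r where r: "r\<in>Pts" "inc r L" "inc r l0" using A2[of L l0] L l0 by blast
          have "r\<noteq>p" using r l0 by auto
          have "ln r = L" using A1[of p r] lnP[of r] r L p \<open>r\<noteq>p\<close> by blast
          then show "L \<in> ln ` {r\<in>Pts. inc r l0}" using r by blast
        qed
      qed
    qed
    then show ?thesis using A4fin[OF l0(1)] A4card[OF l0(1)] bij_betw_finite bij_betw_same_card by metis
  qed
  have nePts: "Pts \<noteq> {}" using Q by auto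
  then obtain p0 where p0: "p0 \<in> Pts" by blast
  obtain l0 where l0: "l0 \<in> Lns" "\<not> inc p0 l0" using offline p0 by blast
  have finPts: "finite Pts"
  proof (rule finite_subset)
    show "Pts \<subseteq> insert p0 (\<Union>L\<in>{L\<in>Lns. inc p0 L}. {r\<in>Pts. inc r L})"
    proof
      fix r assume r: "r\<in>Pts"
      show "r \<in> insert p0 (\<Union>L\<in>{L\<in>Lns. inc p0 L}. {r\<in>Pts. inc r L})"
      proof (cases "r = p0")
        case False
        then obtain L where "L\<in>Lns" "inc p0 L" "inc r L" using A1[of p0 r] p0 r by blast
        then show ?thesis using r by blast
      qed simp
    qed
    show "finite (insert p0 (\<Union>L\<in>{L\<in>Lns. inc p0 L}. {r\<in>Pts. inc r L}))"
      using pt[OF p0] A4fin by auto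
  qed
  have finLns: "finite Lns"
  proof (rule finite_subset)
    show "Lns \<subseteq> insert l0 (\<Union>r\<in>{r\<in>Pts. inc r l0}. {L\<in>Lns. inc r L})"
    proof
      fix L assume L: "L\<in>Lns"
      show "L \<in> insert l0 (\<Union>r\<in>{r\<in>Pts. inc r l0}. {L\<in>Lns. inc r L})"
      proof (cases "L = l0")
        case False
        then obtain r where "r\<in>Pts" "inc r L" "inc r l0" using A2[of L l0] l0 L by blast
        then show ?thesis using L by blast
      qed simp
    qed
    show "finite (insert l0 (\<Union>r\<in>{r\<in>Pts. inc r l0}. {L\<in>Lns. inc r L}))"
      using pt A4fin[OF l0(1)] by auto
  qed
  have ptf: "\<And>p. p\<in>Pts \<Longrightarrow> finite {L\<in>Lns. inc p L}" using pt by simp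
  have ptc: "\<And>p. p\<in>Pts \<Longrightarrow> card {L\<in>Lns. inc p L} = q+1" using pt by simp
  have neLns: "Lns \<noteq> {}" using l0 by blast
  show ?thesis by (rule pplane.intro[OF A1 A2 A4fin A4card ptf ptc finPts finLns neLns nePts])
qed

theorem proposition3:
  fixes Pts :: "'p set" and Lns :: "'l set" and inc :: "'p \<Rightarrow> 'l \<Rightarrow> bool"
    and q :: nat and PD :: "'p set" and LD :: "'l set"
  assumes plane: "projective_plane Pts Lns inc q"
    and dom: "dominating_set Pts Lns inc PD LD"
    and nonprimal: "\<not> primal Pts Lns inc q PD LD"
  defines "k \<equiv> max_pts_on_line Lns inc PD"
    and "c \<equiv> max_lines_through_pt Pts inc LD"
    and "D \<equiv> card PD + card LD"
  shows "(int D + int (card PD) \<le> 4 * int q - 3 \<longrightarrow> int k \<le> int (card PD) - int q + 1) \<and>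
         (int D + int (card LD) \<le> 4 * int q - 3 \<longrightarrow> int c \<le> int (card LD) - int q + 1) \<and>
         (2 * int D \<le> 5 * int q - 3 \<longrightarrow>
            int k \<le> int (card PD) - int q + 1 \<and> int c \<le> int (card LD) - int q + 1)"
proof -
  interpret P: pplane Pts Lns inc q using pp_to_pplane[OF plane] .
  interpret Dl: pplane Lns Pts "\<lambda>l p. inc p l" q by (rule P.dual)
  have dom': "dominating_set Lns Pts (\<lambda>l p. inc p l) LD PD"
    using dom unfolding dominating_set_def by blast
  have np': "\<not> primal Lns Pts (\<lambda>l p. inc p l) q LD PD"
    using nonprimal unfolding primal_def by blast
  obtain l where l: "l\<in>Lns" "k = card {p\<in>PD. inc p l}"
  proof -
    have "finite ((\<lambda>l. card {p\<in>PD. inc p l}) ` Lns)" using P.finLns by simp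
    moreover have "(\<lambda>l. card {p\<in>PD. inc p l}) ` Lns \<noteq> {}" using P.neLns by simp
    ultimately have "k \<in> (\<lambda>l. card {p\<in>PD. inc p l}) ` Lns"
      unfolding k_def max_pts_on_line_def by (rule Max_in)
    then show ?thesis using that by blast
  qed
  obtain p where p: "p\<in>Pts" "c = card {L\<in>LD. inc p L}"
  proof -
    have "finite ((\<lambda>p. card {L\<in>LD. inc p L}) ` Pts)" using P.finPts by simp
    moreover have "(\<lambda>p. card {L\<in>LD. inc p L}) ` Pts \<noteq> {}" using P.nePts by simp
    ultimately have "c \<in> (\<lambda>p. card {L\<in>LD. inc p L}) ` Pts"
      unfolding c_def max_lines_through_pt_def by (rule Max_in)
    then show ?thesis using that by blast
  qed
  have K: "4*q \<le> 2*card PD + card LD + 2 \<and> q \<le> card LD"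
    if a: "\<not> (int k \<le> int (card PD) - int q + 1)"
  proof -
    have "card PD + 2 \<le> card {p\<in>PD. inc p l} + q" using a l(2) by linarith
    then show ?thesis using P.core[OF dom nonprimal l(1)] by blast
  qed
  have C: "4*q \<le> 2*card LD + card PD + 2 \<and> q \<le> card PD"
    if a: "\<not> (int c \<le> int (card LD) - int q + 1)"
  proof -
    have "card LD + 2 \<le> card {L\<in>LD. inc p L} + q" using a p(2) by linarith
    then show ?thesis using Dl.core[OF dom' np' p(1)] by simp
  qed
  show ?thesis
  proof (intro conjI impI)
    show "int k \<le> int (card PD) - int q + 1" if "int D + int (card PD) \<le> 4 * int q - 3"
      using that K unfolding D_def by linarith
    show "int c \<le> int (card LD) - int q + 1" if "int D + int (card LD) \<le> 4 * int q - 3"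
      using that C unfolding D_def by linarith
    show "int k \<le> int (card PD) - int q + 1" if h: "2 * int D \<le> 5 * int q - 3"
    proof (rule ccontr)
      assume "\<not> ?thesis"
      from K[OF this] h show False unfolding D_def of_nat_add by (elim conjE) presburger
    qed
    show "int c \<le> int (card LD) - int q + 1" if h: "2 * int D \<le> 5 * int q - 3"
    proof (rule ccontr)
      assume "\<not> ?thesis"
      from C[OF this] h show False unfolding D_def of_nat_add by (elim conjE) presburger
    qed
  qed
qed

end
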